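(* Let $\{G_i\}$ be a family of connected graphs with common induced subgraph $J$, embedded as $J_i\subseteq G_i$, such that $\{(G_i|J_i)\}$ is isometric, and let $H=\amalg\{(G_i|J_i)\}$. Let $uv\in Solv(J_i:G_i)$ with $d(u,J)<d(v,J)$, and let $c\in V(J)$ with $d(u,c)=d(u,J)$. Then $c$ distinguishes $uv$. Moreover, if for some $j\neq i$ there exists $s\in V(G_j)$ with $d(s,c)=d(s,J)$, then $s$ distinguishes $uv$.
   Context: All distances $d$ are shortest-path distances in $H$, and $d(x,J)=\min_{w\in V(J)}d(x,w)$. A vertex $w$ distinguishes an edge $uv$ if $d(w,u)\neq d(w,v)$. $J$ is a common induced subgraph of each $G_i$ via injective maps $\iota_i:V(J)\to V(G_i)$ with $\iota_i(x)\iota_i(y)\in E(G_i)$ iff $xy\in E(J)$; $J_i$ is the induced image, $x^i=\iota_i(x)$. $H=\amalg\{(G_i|J_i)\}$ is obtained from the disjoint union of the $G_i$ by identifying, for each $x\in V(J)$, all $x^i$ into one vertex; $G_i$ and $J$ are regarded as subgraphs of $H$. The family is isometric if $d_{G_i}(a^i,b^i)=d_{G_j}(a^j,b^j)$ for all $i,j$, $a,b\in V(J)$. $Solv(J_i:G_i)$ is the set of edges $uv$ of $G_i$ with $d(u,J)\neq d(v,J)$. *)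

theory Defs
  imports "HOL-Library.Extended_Nat"
begin

definition simple_graph :: "'a set \<Rightarrow> ('a \<times> 'a) set \<Rightarrow> bool" where
  "simple_graph V E \<longleftrightarrow> E \<subseteq> V \<times> V \<and> sym E \<and> irrefl E"

definition connected_graph :: "'a set \<Rightarrow> ('a \<times> 'a) set \<Rightarrow> bool" where
  "connected_graph V E \<longleftrightarrow> simple_graph V E \<and> V \<noteq> {} \<and> (\<forall>x\<in>V. \<forall>y\<in>V. (x, y) \<in> E\<^sup>*)"

text \<open>Shortest-path distance (infinite if no path).\<close>
definition gdist :: "('a \<times> 'a) set \<Rightarrow> 'a \<Rightarrow> 'a \<Rightarrow> enat" where
  "gdist E x y = Inf (enat ` {n. (x, y) \<in> E ^^ n})"

definition common_induced_subgraph ::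
  "'i set \<Rightarrow> ('i \<Rightarrow> 'v set) \<Rightarrow> ('i \<Rightarrow> ('v \<times> 'v) set) \<Rightarrow> 'j set \<Rightarrow> ('j \<times> 'j) set
   \<Rightarrow> ('i \<Rightarrow> 'j \<Rightarrow> 'v) \<Rightarrow> bool" where
  "common_induced_subgraph I V E VJ EJ \<iota> \<longleftrightarrow>
     simple_graph VJ EJ \<and>
     (\<forall>i\<in>I. simple_graph (V i) (E i) \<and> inj_on (\<iota> i) VJ \<and> \<iota> i ` VJ \<subseteq> V i \<and>
        (\<forall>x\<in>VJ. \<forall>y\<in>VJ. (\<iota> i x, \<iota> i y) \<in> E i \<longleftrightarrow> (x, y) \<in> EJ))"

definition isometric_family ::
  "'i set \<Rightarrow> ('i \<Rightarrow> ('v \<times> 'v) set) \<Rightarrow> 'j set \<Rightarrow> ('i \<Rightarrow> 'j \<Rightarrow> 'v) \<Rightarrow> bool" where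
  "isometric_family I E VJ \<iota> \<longleftrightarrow>
     (\<forall>i\<in>I. \<forall>j\<in>I. \<forall>a\<in>VJ. \<forall>b\<in>VJ.
        gdist (E i) (\<iota> i a) (\<iota> i b) = gdist (E j) (\<iota> j a) (\<iota> j b))"

text \<open>The amalgamation H: vertices of J are represented by Inl x; every other vertex v of G_i
  by Inr (i, v).  amal_vert maps a vertex of G_i to the corresponding vertex of H.\<close>
definition amal_vert :: "'j set \<Rightarrow> ('i \<Rightarrow> 'j \<Rightarrow> 'v) \<Rightarrow> 'i \<Rightarrow> 'v \<Rightarrow> 'j + ('i \<times> 'v)" where
  "amal_vert VJ \<iota> i v = (if v \<in> \<iota> i ` VJ then Inl (the_inv_into VJ (\<iota> i) v) else Inr (i, v))"

definition amal_verts ::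
  "'i set \<Rightarrow> ('i \<Rightarrow> 'v set) \<Rightarrow> 'j set \<Rightarrow> ('i \<Rightarrow> 'j \<Rightarrow> 'v) \<Rightarrow> ('j + ('i \<times> 'v)) set" where
  "amal_verts I V VJ \<iota> = (\<Union>i\<in>I. amal_vert VJ \<iota> i ` V i)"

definition amal_edges ::
  "'i set \<Rightarrow> ('i \<Rightarrow> ('v \<times> 'v) set) \<Rightarrow> 'j set \<Rightarrow> ('i \<Rightarrow> 'j \<Rightarrow> 'v)
   \<Rightarrow> (('j + ('i \<times> 'v)) \<times> ('j + ('i \<times> 'v))) set" where
  "amal_edges I E VJ \<iota> =
     {(amal_vert VJ \<iota> i a, amal_vert VJ \<iota> i b) | i a b. i \<in> I \<and> (a, b) \<in> E i}"

definition dist_to_J ::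
  "(('j + ('i \<times> 'v)) \<times> ('j + ('i \<times> 'v))) set \<Rightarrow> 'j set \<Rightarrow> 'j + ('i \<times> 'v) \<Rightarrow> enat" where
  "dist_to_J EH VJ x = (INF w\<in>VJ. gdist EH x (Inl w))"

end

theory Submission
  imports Defs
begin

lemma relpow_sym:
  assumes "sym R" shows "(x,y) \<in> R^^n \<Longrightarrow> (y,x) \<in> R^^n"
proof (induction n arbitrary: x y)
  case 0 then show ?case by simp
next
  case (Suc n)
  from Suc.prems obtain z where xz: "(x,z) \<in> R" and zy: "(z,y) \<in> R^^n"
    using relpow_Suc_D2 by metis
  have "(y,z) \<in> R^^n" using Suc.IH zy by blast
  moreover have "(z,x) \<in> R" using xz assms by (meson symD)
  ultimately show ?case by (meson relpow_Suc_I)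
qed

lemma gdist_le: "(x,y) \<in> E^^n \<Longrightarrow> gdist E x y \<le> enat n"
  unfolding gdist_def by (auto intro: Inf_lower)

lemma gdist_attained:
  assumes "gdist E x y \<noteq> \<infinity>"
  shows "\<exists>n. (x,y) \<in> E^^n \<and> gdist E x y = enat n"
proof -
  let ?A = "enat ` {n. (x, y) \<in> E ^^ n}"
  have ne: "?A \<noteq> {}"
  proof
    assume "?A = {}"
    then have "gdist E x y = \<infinity>" unfolding gdist_def by (simp add: top_enat_def)
    then show False using assms by simp
  qed
  then have "Inf ?A \<in> ?A" unfolding Inf_enat_def by (auto intro: LeastI)
  then show ?thesis unfolding gdist_def by auto
qed

lemma gdist_sym: "sym E \<Longrightarrow> gdist E x y = gdist E y x"
  unfolding gdist_def using relpow_sym by metis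

lemma gdist_triangle: "gdist E x z \<le> gdist E x y + gdist E y z"
proof (cases "gdist E x y = \<infinity> \<or> gdist E y z = \<infinity>")
  case True then show ?thesis by auto
next
  case False
  then obtain m n where m: "(x,y) \<in> E^^m" "gdist E x y = enat m"
    and n: "(y,z) \<in> E^^n" "gdist E y z = enat n" using gdist_attained by metis
  have "(x,z) \<in> E^^(m+n)" using m n by (auto simp: relpow_add)
  then show ?thesis using m n gdist_le by fastforce
qed

theorem lemma11:
  fixes I :: "'i set" and V :: "'i \<Rightarrow> 'v set" and E :: "'i \<Rightarrow> ('v \<times> 'v) set"
    and VJ :: "'j set" and EJ :: "('j \<times> 'j) set" and \<iota> :: "'i \<Rightarrow> 'j \<Rightarrow> 'v"
    and i :: 'i and u v :: 'v and c :: 'j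
  defines "EH \<equiv> amal_edges I E VJ \<iota>"
    and "h \<equiv> amal_vert VJ \<iota>"
  assumes conn: "\<forall>k\<in>I. connected_graph (V k) (E k)"
    and cis: "common_induced_subgraph I V E VJ EJ \<iota>"
    and iso: "isometric_family I E VJ \<iota>"
    and i: "i \<in> I"
    and uv: "(u, v) \<in> E i"
    and less: "dist_to_J EH VJ (h i u) < dist_to_J EH VJ (h i v)"
    and c: "c \<in> VJ"
    and cu: "gdist EH (h i u) (Inl c) = dist_to_J EH VJ (h i u)"
  shows "gdist EH (Inl c) (h i u) \<noteq> gdist EH (Inl c) (h i v)
    \<and> (\<forall>j\<in>I. \<forall>s\<in>V j. j \<noteq> i \<and> gdist EH (h j s) (Inl c) = dist_to_J EH VJ (h j s)
          \<longrightarrow> gdist EH (h j s) (h i u) \<noteq> gdist EH (h j s) (h i v))"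
proof -
  let ?d = "dist_to_J EH VJ"
  have simp_k: "\<And>k. k \<in> I \<Longrightarrow> simple_graph (V k) (E k)"
    using cis unfolding common_induced_subgraph_def by blast
  have symEH: "sym EH"
  proof (rule symI)
    fix a b assume "(a,b) \<in> EH"
    then obtain k a' b' where k: "k \<in> I" "(a',b') \<in> E k" "a = h k a'" "b = h k b'"
      unfolding EH_def amal_edges_def h_def by blast
    then have "(b',a') \<in> E k" using simp_k[OF k(1)] unfolding simple_graph_def by (meson symD)
    then show "(b,a) \<in> EH" using k unfolding EH_def amal_edges_def h_def by blast
  qed
  have dJ_le: "\<And>x w. w \<in> VJ \<Longrightarrow> ?d x \<le> gdist EH x (Inl w)"
    unfolding dist_to_J_def by (rule INF_lower)
  have map_path: "\<And>k a b n. k \<in> I \<Longrightarrow> (a,b) \<in> (E k)^^n \<Longrightarrow> (h k a, h k b) \<in> EH^^n"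
  proof -
    fix k a b n assume k: "k \<in> I"
    show "(a,b) \<in> (E k)^^n \<Longrightarrow> (h k a, h k b) \<in> EH^^n"
    proof (induction n arbitrary: b)
      case 0 then show ?case by simp
    next
      case (Suc n)
      then obtain z where "(a,z) \<in> (E k)^^n" "(z,b) \<in> E k" by auto
      moreover have "(h k z, h k b) \<in> EH" using k calculation(2)
        unfolding EH_def amal_edges_def h_def by blast
      ultimately show ?case using Suc.IH by auto
    qed
  qed
  have edge_side: "\<And>z y k a b k'. (z,y) \<in> EH \<Longrightarrow> y = Inr (k,b) \<Longrightarrow> z \<noteq> Inr (k',a) \<or> k' = k"
  proof -
    fix z y k a b k' assume "(z,y) \<in> EH" "y = Inr (k,b)"
    then obtain m a' b' where "z = h m a'" "Inr (k,b) = h m b'"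
      unfolding EH_def amal_edges_def h_def by force
    then show "z \<noteq> Inr (k',a) \<or> k' = k"
      unfolding h_def amal_vert_def by (auto split: if_splits)
  qed
  have split: "\<And>n x y. (x,y) \<in> EH^^n \<Longrightarrow> (\<forall>a. x \<noteq> Inr (i,a)) \<Longrightarrow> (\<exists>b. y = Inr (i,b)) \<Longrightarrow>
      \<exists>w m1 m2. n = m1 + m2 \<and> (x, Inl w) \<in> EH^^m1 \<and> (Inl w, y) \<in> EH^^m2"
  proof -
    fix n x y
    show "(x,y) \<in> EH^^n \<Longrightarrow> (\<forall>a. x \<noteq> Inr (i,a)) \<Longrightarrow> (\<exists>b. y = Inr (i,b)) \<Longrightarrow>
      \<exists>w m1 m2. n = m1 + m2 \<and> (x, Inl w) \<in> EH^^m1 \<and> (Inl w, y) \<in> EH^^m2"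
    proof (induction n arbitrary: y)
      case 0 then show ?case by auto
    next
      case (Suc n)
      then obtain z where xz: "(x,z) \<in> EH^^n" and zy: "(z,y) \<in> EH" by auto
      obtain b where yb: "y = Inr (i,b)" using Suc.prems by blast
      show ?case
      proof (cases "\<exists>b'. z = Inr (i,b')")
        case True
        then obtain w m1 m2 where "n = m1 + m2" "(x, Inl w) \<in> EH^^m1" "(Inl w, z) \<in> EH^^m2"
          using Suc.IH xz Suc.prems(2) by blast
        then show ?thesis using zy
          by (intro exI[of _ w] exI[of _ m1] exI[of _ "Suc m2"]) auto
      next
        case False
        have "\<exists>w. z = Inl w"
        proof (cases z)
          case (Inr p)
          then obtain k a where "z = Inr (k,a)" by (cases p) auto
          then show ?thesis using edge_side[OF zy yb] False by blast
        qed auto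
        then obtain w where "z = Inl w" by blast
        then show ?thesis using xz zy
          by (intro exI[of _ w] exI[of _ n] exI[of _ "Suc 0"]) auto
      qed
    qed
  qed
  have injc: "\<And>k. k \<in> I \<Longrightarrow> h k (\<iota> k c) = Inl c"
    using cis c unfolding common_induced_subgraph_def h_def amal_vert_def
    by (auto simp: the_inv_into_f_f)
  obtain b where b: "?d (h i u) = enat b" using less by (cases "?d (h i u)") auto
  have dv: "enat (Suc b) \<le> ?d (h i v)" using less b by (simp add: ileI1 eSuc_enat[symmetric])
  have hv: "h i v = Inr (i,v)"
  proof (rule ccontr)
    assume "h i v \<noteq> Inr (i,v)"
    then obtain w where w: "w \<in> VJ" "h i v = Inl w"
      unfolding h_def amal_vert_def using cis i
      by (auto simp: common_induced_subgraph_def split: if_splits intro: the_inv_into_into)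
    have "gdist EH (h i v) (h i v) \<le> enat 0" by (rule gdist_le) simp
    then have "?d (h i v) \<le> 0" using dJ_le[OF w(1), of "h i v"] w(2) by (metis order_trans zero_enat_def)
    then show False using dv by (metis order_trans enat_ord_simps(1) zero_enat_def Suc_n_not_le_n le0 le_trans)
  qed
  have part1: "gdist EH (Inl c) (h i u) \<noteq> gdist EH (Inl c) (h i v)"
  proof -
    have "gdist EH (Inl c) (h i u) = enat b" using cu b gdist_sym[OF symEH] by metis
    moreover have "gdist EH (Inl c) (h i v) \<ge> enat (Suc b)"
      using dJ_le[OF c, of "h i v"] dv gdist_sym[OF symEH] by (metis order_trans)
    ultimately show ?thesis by (metis enat_ord_simps(1) Suc_n_not_le_n)
  qed
  have part2: "gdist EH (h j s) (h i u) \<noteq> gdist EH (h j s) (h i v)"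
    if j: "j \<in> I" "s \<in> V j" "j \<noteq> i" and sc: "gdist EH (h j s) (Inl c) = ?d (h j s)" for j s
  proof -
    have "\<iota> j c \<in> V j" using cis c j unfolding common_induced_subgraph_def by blast
    then have "(s, \<iota> j c) \<in> (E j)\<^sup>*" using conn j unfolding connected_graph_def by blast
    then obtain n where "(s, \<iota> j c) \<in> (E j)^^n" using rtrancl_power by blast
    then have "(h j s, Inl c) \<in> EH^^n" using map_path[OF j(1)] injc[OF j(1)] by metis
    then have "gdist EH (h j s) (Inl c) \<le> enat n" by (rule gdist_le)
    then obtain a where a: "gdist EH (h j s) (Inl c) = enat a"
      by (cases "gdist EH (h j s) (Inl c)") auto
    have up: "gdist EH (h j s) (h i u) \<le> enat (a + b)"
    proof -
      have "gdist EH (h j s) (h i u) \<le> gdist EH (h j s) (Inl c) + gdist EH (Inl c) (h i u)"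
        by (rule gdist_triangle)
      moreover have "gdist EH (Inl c) (h i u) = enat b" using cu b gdist_sym[OF symEH] by metis
      ultimately show ?thesis using a by simp
    qed
    have low: "enat (a + Suc b) \<le> gdist EH (h j s) (h i v)"
    proof (cases "gdist EH (h j s) (h i v) = \<infinity>")
      case True then show ?thesis by simp
    next
      case False
      then obtain n where n: "(h j s, h i v) \<in> EH^^n" "gdist EH (h j s) (h i v) = enat n"
        using gdist_attained by metis
      have "\<forall>a'. h j s \<noteq> Inr (i,a')" using j(3) unfolding h_def amal_vert_def by auto
      then obtain w m1 m2 where w: "n = m1 + m2" "(h j s, Inl w) \<in> EH^^m1" "(Inl w, h i v) \<in> EH^^m2"
        using split[OF n(1)] hv by blast
      have wJ: "w \<in> VJ"
      proof (cases m2)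
        case 0
        then show ?thesis using w(3) hv by simp
      next
        case (Suc m)
        then obtain z where "(Inl w, z) \<in> EH" using w(3) relpow_Suc_D2 by metis
        then obtain k a' b' where "k \<in> I" "(a',b') \<in> E k" "Inl w = h k a'"
          unfolding EH_def amal_edges_def h_def by blast
        then show ?thesis using cis unfolding h_def amal_vert_def common_induced_subgraph_def
          by (auto split: if_splits intro: the_inv_into_into)
      qed
      have "enat a \<le> enat m1"
        using a sc dJ_le[OF wJ, of "h j s"] gdist_le[OF w(2)] by (metis order_trans)
      moreover have "enat (Suc b) \<le> enat m2"
      proof -
        have "(h i v, Inl w) \<in> EH^^m2" using relpow_sym[OF symEH w(3)] .
        then show ?thesis using dv dJ_le[OF wJ, of "h i v"] gdist_le by (metis order_trans)
      qed
      ultimately show ?thesis using n w by simp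
    qed
    show ?thesis using up low by (metis add_Suc_right enat_ord_simps(1) enat_ord_simps(2) lessI
          order.trans not_le)
  qed
  show ?thesis using part1 part2 by blast
qed

end
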